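(* Let $\mathcal C$ be a finite set of cycles and $m\ge1$. The following are equivalent: (i) $\big|\bigcup_{c\in\mathcal C}\Omega_m(c)\big|=\sum_{c\in\mathcal C}\mathrm{per}(c)$; (ii) the map $v\mapsto\mathrm{lbit}_m(v)$ is injective on $\bigcup_{c\in\mathcal C}\Omega_{m+1}(c)$; (iii) the map $v\mapsto\mathrm{hbit}_m(v)$ is injective on $\bigcup_{c\in\mathcal C}\Omega_{m+1}(c)$.
   Context: A periodic binary sequence $s:\mathbb Z\to\{0,1\}$ of least period $p$ determines the cycle $c=[s(0),\dots,s(p-1)]$ (all shifts of $s$ give the same cycle), with $\mathrm{per}(c)=p$. For such $c$, $\Omega_k(c)=\{(s(i),s((i+1)\bmod p),\dots,s((i+k-1)\bmod p)):0\le i<p\}\subseteq\{0,1\}^k$. For $v=(a_1,\dots,a_{m+1})\in\{0,1\}^{m+1}$, $\mathrm{hbit}_m(v)=(a_1,\dots,a_m)$ and $\mathrm{lbit}_m(v)=(a_2,\dots,a_{m+1})$. *)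

theory Defs
  imports Main
begin

(* Binary sequences s : int => bool (True = 1, False = 0). *)

definition has_period :: "(int \<Rightarrow> bool) \<Rightarrow> nat \<Rightarrow> bool" where
  "has_period s p \<longleftrightarrow> p > 0 \<and> (\<forall>i. s (i + int p) = s i)"

definition is_periodic :: "(int \<Rightarrow> bool) \<Rightarrow> bool" where
  "is_periodic s \<longleftrightarrow> (\<exists>p. has_period s p)"

definition least_period :: "(int \<Rightarrow> bool) \<Rightarrow> nat" where
  "least_period s = (LEAST p. has_period s p)"

definition shift :: "int \<Rightarrow> (int \<Rightarrow> bool) \<Rightarrow> (int \<Rightarrow> bool)" where
  "shift k s = (\<lambda>i. s (i + k))"

definition cycle_of :: "(int \<Rightarrow> bool) \<Rightarrow> (int \<Rightarrow> bool) set" where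
  "cycle_of s = range (\<lambda>k. shift k s)"

definition is_cycle :: "(int \<Rightarrow> bool) set \<Rightarrow> bool" where
  "is_cycle c \<longleftrightarrow> (\<exists>s. is_periodic s \<and> c = cycle_of s)"

definition rep :: "(int \<Rightarrow> bool) set \<Rightarrow> (int \<Rightarrow> bool)" where
  "rep c = (SOME s. s \<in> c)"

definition per :: "(int \<Rightarrow> bool) set \<Rightarrow> nat" where
  "per c = least_period (rep c)"

definition Omega :: "nat \<Rightarrow> (int \<Rightarrow> bool) set \<Rightarrow> bool list set" where
  "Omega k c = (let s = rep c; p = per c in
     {map (\<lambda>j. s ((int i + int j) mod int p)) [0..<k] | i. i < p})"

definition hbit :: "nat \<Rightarrow> bool list \<Rightarrow> bool list" where
  "hbit m v = take m v"

definition lbit :: "nat \<Rightarrow> bool list \<Rightarrow> bool list" where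
  "lbit m v = take m (drop 1 v)"

end

theory Submission
  imports Defs
begin

definition win :: "nat \<Rightarrow> (int \<Rightarrow> bool) \<Rightarrow> int \<Rightarrow> bool list" where
  "win k s i = map (\<lambda>j. s (i + int j)) [0..<k]"

lemma per_nat: "has_period s p \<Longrightarrow> s (x + int p * int n) = s x"
proof (induction n arbitrary: x)
  case 0 then show ?case by simp
next
  case (Suc n)
  have eq: "x + int p * int (Suc n) = (x + int p * int n) + int p" by (simp add: algebra_simps)
  have "s ((x + int p * int n) + int p) = s (x + int p * int n)" using Suc.prems unfolding has_period_def by blast
  then show ?case using Suc.IH[OF Suc.prems, of x] eq by metis
qed

lemma per_int: assumes "has_period s p" shows "s (x + int p * t) = s x"
proof (cases "t \<ge> 0")
  case True
  then have "t = int (nat t)" by simp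
  then obtain n where "t = int n" by blast
  then show ?thesis using per_nat[OF assms] by simp
next
  case False
  define n where "n = nat (- t)"
  have n: "t = - int n" using False by (simp add: n_def)
  have "s ((x + int p * t) + int p * int n) = s (x + int p * t)" using per_nat[OF assms] by blast
  moreover have "(x + int p * t) + int p * int n = x" using n by (simp add: algebra_simps)
  ultimately show ?thesis by simp
qed

lemma per_mod: assumes "has_period s p" shows "s (x mod int p) = s x"
proof -
  have eq: "x mod int p = x + int p * (- (x div int p))"
    by (simp add: algebra_simps minus_div_mult_eq_mod[symmetric])
  show ?thesis unfolding eq by (rule per_int[OF assms])
qed

lemma win_mod: assumes "has_period s p" shows "win k s (x mod int p) = win k s x"
proof -
  have "s (x mod int p + int j) = s (x + int j)" for j
  proof -
    have "s (x mod int p + int j) = s ((x mod int p + int j) mod int p)" using per_mod[OF assms] by simp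
    also have "\<dots> = s ((x + int j) mod int p)" by (simp add: mod_add_left_eq)
    also have "\<dots> = s (x + int j)" using per_mod[OF assms] by simp
    finally show ?thesis .
  qed
  then show ?thesis by (simp add: win_def)
qed

lemma lbit_win: "lbit m (win (Suc m) s i) = win m s (i+1)"
  by (rule nth_equalityI) (auto simp: lbit_def win_def algebra_simps simp del: upt_Suc)

lemma hbit_win: "hbit m (win (Suc m) s i) = win m s i"
  by (rule nth_equalityI) (auto simp: hbit_def win_def algebra_simps)

lemma win_hd: "m \<ge> 1 \<Longrightarrow> win m s i ! 0 = s i"
  by (simp add: win_def)

lemma per_dvd:
  assumes hp: "has_period s (least_period s)" and d: "\<forall>x. s (x + d) = s x"
  shows "int (least_period s) dvd d"
proof (rule ccontr)
  assume nd: "\<not> ?thesis"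
  define q where "q = least_period s"
  have qpos: "q > 0" using hp by (simp add: has_period_def q_def)
  define r where "r = d mod int q"
  have "r \<ge> 0" using qpos by (simp add: r_def)
  moreover have "r \<noteq> 0" using nd unfolding r_def q_def by (simp add: dvd_eq_mod_eq_0)
  ultimately have r0: "r > 0" by simp
  have rq: "r < int q" using qpos by (simp add: r_def)
  have "s (x + r) = s x" for x
  proof -
    have eqn: "x + r = (x + d) + int q * (- (d div int q))"
      by (simp add: r_def algebra_simps minus_div_mult_eq_mod[symmetric])
    have "s ((x + d) + int q * (- (d div int q))) = s (x + d)" unfolding q_def by (rule per_int[OF hp])
    then have "s (x + r) = s (x + d)" by (metis eqn)
    then show ?thesis using d by simp
  qed
  then have "has_period s (nat r)" using r0 by (simp add: has_period_def)
  then have "q \<le> nat r" unfolding q_def least_period_def by (rule Least_le)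
  then have "int q \<le> r" using r0 by simp
  then show False using rq by simp
qed

lemma shift_shift: "shift a (shift k s) = shift (a + k) s"
  by (simp add: shift_def algebra_simps)

lemma cycle_of_shift: "cycle_of (shift k s) = cycle_of s"
proof -
  have "cycle_of (shift k s) \<subseteq> cycle_of s"
    unfolding cycle_of_def by (auto simp: shift_shift)
  moreover have "cycle_of s \<subseteq> cycle_of (shift k s)"
  proof
    fix t assume "t \<in> cycle_of s"
    then obtain a where "t = shift a s" by (auto simp: cycle_of_def)
    then have "t = shift (a - k) (shift k s)" by (simp add: shift_shift)
    then show "t \<in> cycle_of (shift k s)" by (auto simp: cycle_of_def)
  qed
  ultimately show ?thesis by blast
qed

lemma cycle_facts:
  assumes "is_cycle c"
  shows "has_period (rep c) (per c) \<and> c = cycle_of (rep c)"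
proof -
  obtain s p where hp: "has_period s p" and c: "c = cycle_of s"
    using assms by (auto simp: is_cycle_def is_periodic_def)
  have "shift 0 s = s" by (simp add: shift_def)
  then have "s \<in> c" unfolding c cycle_of_def by (metis rangeI)
  then have "rep c \<in> c" unfolding rep_def by (metis someI_ex)
  then obtain k where k: "rep c = shift k s" by (auto simp: c cycle_of_def)
  have "s ((i + int p) + k) = s (i + k)" for i
  proof -
    have "(i + int p) + k = (i + k) + int p" by simp
    then show ?thesis using hp unfolding has_period_def by metis
  qed
  then have "has_period (rep c) p" using hp by (simp add: k has_period_def shift_def)
  then have "has_period (rep c) (least_period (rep c))"
    unfolding least_period_def by (rule LeastI)
  moreover have "c = cycle_of (rep c)" using k c cycle_of_shift by simp
  ultimately show ?thesis by (simp add: per_def)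
qed

lemma cycle_eq:
  assumes "is_cycle c1" "is_cycle c2" "\<forall>x. rep c1 x = rep c2 (x + d)"
  shows "c1 = c2"
proof -
  have "rep c1 = shift d (rep c2)" using assms(3) by (auto simp: shift_def)
  then show ?thesis using cycle_facts[OF assms(1)] cycle_facts[OF assms(2)] cycle_of_shift by metis
qed

lemma agree_fwd:
  assumes h1: "has_period s1 p1" and h2: "has_period s2 p2"
    and a: "\<forall>n::nat. s1 (i + int n) = s2 (j + int n)"
  shows "s1 x = s2 (x + (j - i))"
proof -
  define P where "P = int p1 * int p2"
  have "p1 \<ge> 1" "p2 \<ge> 1" using h1 h2 by (auto simp: has_period_def)
  then have "int p1 * int p2 \<ge> 1 * 1" by (intro mult_mono) auto
  then have P1: "P \<ge> 1" by (simp add: P_def)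
  define t where "t = \<bar>x - i\<bar>"
  have "P * t \<ge> t" using P1 by (simp add: t_def mult_le_cancel_right1)
  then have ge: "x - i + P * t \<ge> 0" by (simp add: t_def)
  define n where "n = nat (x - i + P * t)"
  have "s1 x = s1 (x + int p1 * (int p2 * t))" by (rule sym, rule per_int[OF h1])
  also have "\<dots> = s1 (i + int n)" using ge by (simp add: n_def P_def algebra_simps)
  also have "\<dots> = s2 (j + int n)" using a by simp
  also have "\<dots> = s2 ((x + (j - i)) + int p2 * (int p1 * t))" using ge by (simp add: n_def P_def algebra_simps)
  also have "\<dots> = s2 (x + (j - i))" by (rule per_int[OF h2])
  finally show ?thesis .
qed

lemma agree_bwd:
  assumes h1: "has_period s1 p1" and h2: "has_period s2 p2"
    and a: "\<forall>n::nat. s1 (i - int n) = s2 (j - int n)"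
  shows "s1 x = s2 (x + (j - i))"
proof -
  define P where "P = int p1 * int p2"
  have "p1 \<ge> 1" "p2 \<ge> 1" using h1 h2 by (auto simp: has_period_def)
  then have "int p1 * int p2 \<ge> 1 * 1" by (intro mult_mono) auto
  then have P1: "P \<ge> 1" by (simp add: P_def)
  define t where "t = \<bar>i - x\<bar>"
  have "P * t \<ge> t" using P1 by (simp add: t_def mult_le_cancel_right1)
  then have ge: "i - x + P * t \<ge> 0" by (simp add: t_def)
  define n where "n = nat (i - x + P * t)"
  have "s1 x = s1 (x + int p1 * (- (int p2 * t)))" by (rule sym, rule per_int[OF h1])
  also have "\<dots> = s1 (i - int n)" using ge by (simp add: n_def P_def algebra_simps)
  also have "\<dots> = s2 (j - int n)" using a by simp
  also have "\<dots> = s2 ((x + (j - i)) + int p2 * (- (int p1 * t)))" using ge by (simp add: n_def P_def algebra_simps)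
  also have "\<dots> = s2 (x + (j - i))" by (rule per_int[OF h2])
  finally show ?thesis .
qed

lemma Omega_win:
  assumes "has_period (rep c) (per c)"
  shows "Omega k c = (\<lambda>i. win k (rep c) (int i)) ` {..<per c}"
proof -
  have e: "map (\<lambda>j. rep c ((int i + int j) mod int (per c))) [0..<k] = win k (rep c) (int i)" for i
    unfolding win_def by (rule map_cong[OF refl]) (rule per_mod[OF assms])
  have "Omega k c = {win k (rep c) (int i) | i. i < per c}" unfolding Omega_def Let_def e by (rule refl)
  also have "\<dots> = (\<lambda>i. win k (rep c) (int i)) ` {..<per c}" by blast
  finally show ?thesis .
qed

lemma suc_mod_inj:
  fixes i j p :: nat
  assumes "i < p" "j < p" "Suc i mod p = Suc j mod p"
  shows "i = j"
proof -
  have a: "Suc i mod p = (if Suc i = p then 0 else Suc i)" using assms(1) by auto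
  have b: "Suc j mod p = (if Suc j = p then 0 else Suc j)" using assms(2) by auto
  show ?thesis using a b assms by (auto split: if_splits)
qed

lemma dvd_bounds:
  fixes i j p :: nat
  assumes "i < p" "j < p" "int p dvd (int j - int i)"
  shows "i = j"
proof (rule ccontr)
  assume "i \<noteq> j"
  then have "int j - int i \<noteq> 0" by simp
  then have "\<bar>int p\<bar> \<le> \<bar>int j - int i\<bar>" using assms(3) by (rule dvd_imp_le_int)
  then show False using assms(1,2) by linarith
qed

theorem lemma5:
  fixes C :: "(int \<Rightarrow> bool) set set" and m :: nat
  assumes "finite C"
    and "\<forall>c\<in>C. is_cycle c"
    and "m \<ge> 1"
  shows "(card (\<Union>c\<in>C. Omega m c) = (\<Sum>c\<in>C. per c)
            \<longleftrightarrow> inj_on (lbit m) (\<Union>c\<in>C. Omega (Suc m) c))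
       \<and> (inj_on (lbit m) (\<Union>c\<in>C. Omega (Suc m) c)
            \<longleftrightarrow> inj_on (hbit m) (\<Union>c\<in>C. Omega (Suc m) c))"
proof -
  define Occ where "Occ = Sigma C (\<lambda>c. {..<per c})"
  define f where "f = (\<lambda>(c,i). win m (rep c) (int i))"
  define W where "W = (\<Union>c\<in>C. Omega (Suc m) c)"
  have hp: "\<And>c. c \<in> C \<Longrightarrow> has_period (rep c) (per c)" using assms(2) cycle_facts by blast
  have ppos: "\<And>c. c \<in> C \<Longrightarrow> per c > 0" using hp has_period_def by blast
  have finOcc: "finite Occ" using assms(1) by (simp add: Occ_def)
  have cardOcc: "card Occ = (\<Sum>c\<in>C. per c)" unfolding Occ_def using assms(1) by (simp add: card_SigmaI)
  have U: "(\<Union>c\<in>C. Omega k c) = (\<lambda>(c,i). win k (rep c) (int i)) ` Occ" for k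
    using Omega_win[OF hp] by (auto simp: Occ_def)
  have win_in: "win k (rep c) x \<in> (\<Union>c\<in>C. Omega k c)" if c: "c \<in> C" for k c x
  proof -
    have "win k (rep c) x = win k (rep c) (x mod int (per c))" using win_mod[OF hp[OF c]] by simp
    also have "x mod int (per c) = int (nat (x mod int (per c)))" using ppos[OF c] by simp
    finally have e: "win k (rep c) x = win k (rep c) (int (nat (x mod int (per c))))" .
    have "nat (x mod int (per c)) < per c" using ppos[OF c] by (simp add: nat_less_iff)
    then show ?thesis unfolding e using c Omega_win[OF hp[OF c]] by blast
  qed
  have Wel: "\<exists>c i. c \<in> C \<and> i < per c \<and> v = win (Suc m) (rep c) (int i)" if "v \<in> W" for v
    using that unfolding W_def U Occ_def by auto
  have i_iff: "card (\<Union>c\<in>C. Omega m c) = (\<Sum>c\<in>C. per c) \<longleftrightarrow> inj_on f Occ"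
    unfolding U f_def cardOcc[symmetric] using inj_on_iff_eq_card[OF finOcc] by metis
  have fin: "(c1, i) = (c2, j)"
    if c1: "c1 \<in> C" and c2: "c2 \<in> C" and i: "i < per c1" and j: "j < per c2"
      and ag: "\<forall>x. rep c1 x = rep c2 (x + (int j - int i))" for c1 c2 i j
  proof -
    have "c1 = c2" using cycle_eq[OF _ _ ag] assms(2) c1 c2 by blast
    then have "\<forall>x. rep c1 (x + (int j - int i)) = rep c1 x" using ag by simp
    then have "int (per c1) dvd (int j - int i)"
      using per_dvd[of "rep c1"] hp[OF c1] unfolding per_def by blast
    then have "i = j" using dvd_bounds i j \<open>c1 = c2\<close> by blast
    then show ?thesis using \<open>c1 = c2\<close> by simp
  qed
  have A: "inj_on (lbit m) W" if inj: "inj_on f Occ"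
  proof (rule inj_onI)
    fix u v assume u: "u \<in> W" and v: "v \<in> W" and e: "lbit m u = lbit m v"
    obtain c1 i where c1: "c1 \<in> C" and i: "i < per c1" and ud: "u = win (Suc m) (rep c1) (int i)"
      using Wel[OF u] by blast
    obtain c2 j where c2: "c2 \<in> C" and j: "j < per c2" and vd: "v = win (Suc m) (rep c2) (int j)"
      using Wel[OF v] by blast
    have l1: "lbit m u = f (c1, Suc i mod per c1)"
    proof -
      have "lbit m u = win m (rep c1) (int (Suc i))" unfolding ud lbit_win by (simp add: add.commute)
      also have "\<dots> = win m (rep c1) (int (Suc i) mod int (per c1))" using win_mod[OF hp[OF c1]] by simp
      finally show ?thesis by (simp add: f_def of_nat_mod)
    qed
    have l2: "lbit m v = f (c2, Suc j mod per c2)"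
    proof -
      have "lbit m v = win m (rep c2) (int (Suc j))" unfolding vd lbit_win by (simp add: add.commute)
      also have "\<dots> = win m (rep c2) (int (Suc j) mod int (per c2))" using win_mod[OF hp[OF c2]] by simp
      finally show ?thesis by (simp add: f_def of_nat_mod)
    qed
    have "(c1, Suc i mod per c1) \<in> Occ" using c1 ppos[OF c1] by (simp add: Occ_def)
    moreover have "(c2, Suc j mod per c2) \<in> Occ" using c2 ppos[OF c2] by (simp add: Occ_def)
    ultimately have "(c1, Suc i mod per c1) = (c2, Suc j mod per c2)"
      using inj e l1 l2 by (metis inj_onD)
    then have "c1 = c2" "i = j" using suc_mod_inj i j by auto
    then show "u = v" using ud vd by simp
  qed
  have C': "inj_on (hbit m) W" if inj: "inj_on f Occ"
  proof (rule inj_onI)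
    fix u v assume u: "u \<in> W" and v: "v \<in> W" and e: "hbit m u = hbit m v"
    obtain c1 i where c1: "c1 \<in> C" and i: "i < per c1" and ud: "u = win (Suc m) (rep c1) (int i)"
      using Wel[OF u] by blast
    obtain c2 j where c2: "c2 \<in> C" and j: "j < per c2" and vd: "v = win (Suc m) (rep c2) (int j)"
      using Wel[OF v] by blast
    have "f (c1, i) = f (c2, j)" using e unfolding ud vd hbit_win f_def by simp
    moreover have "(c1, i) \<in> Occ" "(c2, j) \<in> Occ" using c1 c2 i j by (auto simp: Occ_def)
    ultimately have "(c1, i) = (c2, j)" using inj by (metis inj_onD)
    then show "u = v" using ud vd by simp
  qed
  have B: "inj_on f Occ" if inj: "inj_on (lbit m) W"
  proof (rule inj_onI)
    fix a b assume a: "a \<in> Occ" and b: "b \<in> Occ" and e: "f a = f b"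
    obtain c1 i where ad: "a = (c1, i)" and c1: "c1 \<in> C" and i: "i < per c1" using a by (auto simp: Occ_def)
    obtain c2 j where bd: "b = (c2, j)" and c2: "c2 \<in> C" and j: "j < per c2" using b by (auto simp: Occ_def)
    have bw: "win m (rep c1) (int i - int n) = win m (rep c2) (int j - int n)" for n
    proof (induction n)
      case 0 then show ?case using e by (simp add: ad bd f_def)
    next
      case (Suc n)
      define x where "x = int i - int (Suc n)"
      define y where "y = int j - int (Suc n)"
      have uW: "win (Suc m) (rep c1) x \<in> W" unfolding W_def by (rule win_in[OF c1])
      have vW: "win (Suc m) (rep c2) y \<in> W" unfolding W_def by (rule win_in[OF c2])
      have "x + 1 = int i - int n" "y + 1 = int j - int n" by (simp_all add: x_def y_def)
      then have "lbit m (win (Suc m) (rep c1) x) = lbit m (win (Suc m) (rep c2) y)"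
        unfolding lbit_win using Suc.IH by simp
      then have "win (Suc m) (rep c1) x = win (Suc m) (rep c2) y" using inj uW vW by (metis inj_onD)
      then have "hbit m (win (Suc m) (rep c1) x) = hbit m (win (Suc m) (rep c2) y)" by simp
      then show ?case unfolding hbit_win x_def y_def .
    qed
    have "\<forall>n::nat. rep c1 (int i - int n) = rep c2 (int j - int n)"
      using bw win_hd[OF assms(3)] by metis
    then have "\<forall>x. rep c1 x = rep c2 (x + (int j - int i))"
      using agree_bwd[OF hp[OF c1] hp[OF c2]] by blast
    then show "a = b" using fin[OF c1 c2 i j] ad bd by simp
  qed
  have D: "inj_on f Occ" if inj: "inj_on (hbit m) W"
  proof (rule inj_onI)
    fix a b assume a: "a \<in> Occ" and b: "b \<in> Occ" and e: "f a = f b"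
    obtain c1 i where ad: "a = (c1, i)" and c1: "c1 \<in> C" and i: "i < per c1" using a by (auto simp: Occ_def)
    obtain c2 j where bd: "b = (c2, j)" and c2: "c2 \<in> C" and j: "j < per c2" using b by (auto simp: Occ_def)
    have fw: "win m (rep c1) (int i + int n) = win m (rep c2) (int j + int n)" for n
    proof (induction n)
      case 0 then show ?case using e by (simp add: ad bd f_def)
    next
      case (Suc n)
      define x where "x = int i + int n"
      define y where "y = int j + int n"
      have uW: "win (Suc m) (rep c1) x \<in> W" unfolding W_def by (rule win_in[OF c1])
      have vW: "win (Suc m) (rep c2) y \<in> W" unfolding W_def by (rule win_in[OF c2])
      have "hbit m (win (Suc m) (rep c1) x) = hbit m (win (Suc m) (rep c2) y)"
        unfolding hbit_win x_def y_def using Suc.IH by simp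
      then have "win (Suc m) (rep c1) x = win (Suc m) (rep c2) y" using inj uW vW by (metis inj_onD)
      then have "lbit m (win (Suc m) (rep c1) x) = lbit m (win (Suc m) (rep c2) y)" by simp
      then have "win m (rep c1) (x + 1) = win m (rep c2) (y + 1)" unfolding lbit_win .
      moreover have "x + 1 = int i + int (Suc n)" "y + 1 = int j + int (Suc n)" by (simp_all add: x_def y_def)
      ultimately show ?case by simp
    qed
    have "\<forall>n::nat. rep c1 (int i + int n) = rep c2 (int j + int n)"
      using fw win_hd[OF assms(3)] by metis
    then have "\<forall>x. rep c1 x = rep c2 (x + (int j - int i))"
      using agree_fwd[OF hp[OF c1] hp[OF c2]] by blast
    then show "a = b" using fin[OF c1 c2 i j] ad bd by simp
  qed
  show ?thesis unfolding W_def[symmetric] using i_iff A B C' D by blast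
qed

end
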